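(* Let $(\mathcal X,\mathcal B,\pi)$, $r$, an arbitrary real-valued noise field $\varepsilon$, $Q$, $Q_*$, $\alpha\in(0,1)$ be as in the context. Assume: (a) $p_0,p_{\rm ref}\in\mathcal P_\pi$ with $\int p|\log p|\,d\pi<\infty$ for $p\in\{p_0,p_{\rm ref}\}$; (b) $\mathbb E_{X\sim p}[e^{|r(X)+\varepsilon(X)|}]<\infty$ for all $p\in\mathcal P_\pi$; (c) $0<Q_*<\infty$, $Q\le Q_*$ everywhere; (d) $\operatorname*{ess\,sup}_x p_0(x)/p_{\rm ref}(x)<\infty$; (e) $\alpha>\Bigl(\int\frac{Q_*}{Q_*-Q(x)}p_{\rm ref}(x)\,\pi(dx)\Bigr)^{-1}$; (f) $Q_{\min}:=\operatorname*{ess\,inf}_x Q(x)>0$. Let $p_{t+1}(x)=\alpha p_{\rm ref}(x)+(1-\alpha)p_t(x)Q(x)/\mathbb E_{X\sim p_t}Q(X)$, $w_t:=p_t/p_{\rm ref}$, and let $w_*$ be the unique fixed point of $L_N$ in $\mathcal P_{\mathbb P_{\rm ref}}$. Then $d_{\mathcal H}(w_t,w_* )$ is finite and strictly decreasing for all $t\ge1$, and $\lim_{t\to\infty}d_{\mathcal H}(w_t,w_* )=0$.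
   Context: $\pi$ is $\sigma$-finite; $\mathcal P_\pi$ = probability densities w.r.t. $\pi$; $r$ measurable; $\{\varepsilon(x)\}$ a real-valued random field. $Q(x):=e^{r(x)}\mathbb E[e^{\varepsilon(x)}]$, $Q_*:=\operatorname*{ess\,sup}_\pi Q$. In (e), the integrand is $+\infty$ where $Q=Q_*$ and the reciprocal of $+\infty$ is $0$. $\mathbb P_{\rm ref}(dx)=p_{\rm ref}(x)\pi(dx)$; $\mathcal P_{\mathbb P_{\rm ref}}$ = probability densities w.r.t. $\mathbb P_{\rm ref}$; $\langle f,g\rangle_{\rm ref}=\int fg\,d\mathbb P_{\rm ref}$; cone $\mathcal K=\{f\in L^1(\mathbb P_{\rm ref}):f>0\ \mathbb P_{\rm ref}\text{-a.s.}\}$. $L[f]=\alpha\langle f,Q\rangle_{\rm ref}+(1-\alpha)fQ$ and $L_N[f]=L[f]/\langle f,Q\rangle_{\rm ref}=\alpha+(1-\alpha)fQ/\langle f,Q\rangle_{\rm ref}$ on $\mathcal K$ (under (c),(e) a unique fixed point of $L_N$ in $\mathcal P_{\mathbb P_{\rm ref}}$ exists). Hilbert projective metric: for $u,v\in\mathcal K$, $d_{\mathcal H}(u,v)=\log\bigl(\operatorname*{ess\,sup}\frac uv\cdot\operatorname*{ess\,sup}\frac vu\bigr)$, essential suprema w.r.t. $\mathbb P_{\rm ref}$. *)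

theory Defs
  imports "HOL-Probability.Probability"
begin

definition prob_density :: "'a measure \<Rightarrow> ('a \<Rightarrow> real) \<Rightarrow> bool" where
  "prob_density N p \<longleftrightarrow> p \<in> borel_measurable N \<and> (\<forall>x\<in>space N. 0 \<le> p x)
     \<and> (\<integral>\<^sup>+ x. ennreal (p x) \<partial>N) = 1"

definition essinf :: "'a measure \<Rightarrow> ('a \<Rightarrow> ereal) \<Rightarrow> ereal" where
  "essinf N f = - esssup N (\<lambda>x. - f x)"

definition Qext :: "'b measure \<Rightarrow> ('a \<Rightarrow> real) \<Rightarrow> ('a \<Rightarrow> 'b \<Rightarrow> real) \<Rightarrow> 'a \<Rightarrow> ennreal" where
  "Qext P r eps x = ennreal (exp (r x)) * (\<integral>\<^sup>+ \<omega>. ennreal (exp (eps x \<omega>)) \<partial>P)"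

definition Qstar :: "'a measure \<Rightarrow> 'b measure \<Rightarrow> ('a \<Rightarrow> real) \<Rightarrow> ('a \<Rightarrow> 'b \<Rightarrow> real) \<Rightarrow> ereal" where
  "Qstar M P r eps = esssup M (\<lambda>x. enn2ereal (Qext P r eps x))"

fun iterp :: "'a measure \<Rightarrow> real \<Rightarrow> ('a \<Rightarrow> real) \<Rightarrow> ('a \<Rightarrow> real) \<Rightarrow> ('a \<Rightarrow> real)
              \<Rightarrow> nat \<Rightarrow> 'a \<Rightarrow> real" where
  "iterp M \<alpha> Q pref p0 0 = p0"
| "iterp M \<alpha> Q pref p0 (Suc t) = (\<lambda>x. \<alpha> * pref x + (1 - \<alpha>) * iterp M \<alpha> Q pref p0 t x * Q x
        / (\<integral> y. iterp M \<alpha> Q pref p0 t y * Q y \<partial>M))"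

text \<open>Hilbert projective metric on the cone K, essential suprema w.r.t. N (= P_ref).
  Value in ereal; infinite iff the product of essential suprema is infinite.\<close>
definition hilbert_metric :: "'a measure \<Rightarrow> ('a \<Rightarrow> real) \<Rightarrow> ('a \<Rightarrow> real) \<Rightarrow> ereal" where
  "hilbert_metric N u v =
     (let s = esssup N (\<lambda>x. ereal (u x / v x)) * esssup N (\<lambda>x. ereal (v x / u x))
      in if s = \<infinity> then \<infinity> else ereal (ln (real_of_ereal s)))"

definition LN :: "'a measure \<Rightarrow> ('a \<Rightarrow> real) \<Rightarrow> real \<Rightarrow> ('a \<Rightarrow> real) \<Rightarrow> 'a \<Rightarrow> real" where
  "LN Pref Q \<alpha> f = (\<lambda>x. \<alpha> + (1 - \<alpha>) * f x * Q x / (\<integral> y. f y * Q y \<partial>Pref))"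

end

theory Submission
  imports Defs
begin



lemma dw_lem:
  fixes \<alpha> W ws :: real
  assumes "0 < \<alpha>" "\<alpha> \<le> ws" "ws \<le> W"
  shows "\<alpha> / W * ws \<le> \<alpha>"
proof -
  have W: "W > 0" using assms by linarith
  have "ws / W \<le> 1" using assms W by (simp add: pos_divide_le_eq)
  then have "\<alpha> * (ws / W) \<le> \<alpha> * 1" using assms by (intro mult_left_mono) auto
  then show ?thesis by simp
qed

lemma real_step_up:
  fixes \<alpha> lam c W ws f q A \<delta> :: real
  assumes "0 < \<alpha>" "\<alpha> < 1" "0 < lam" "0 < c" "\<alpha> \<le> ws" "ws \<le> W" "\<delta> = \<alpha> / W"
    and hfix: "(1 - \<alpha>) * q * ws = lam * (ws - \<alpha>)"
    and fA: "f \<le> A * ws" and cA: "c \<le> A * lam"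
  shows "\<alpha> + (1 - \<alpha>) * f * q / c \<le> (\<delta> + (1 - \<delta>) * (A * lam / c)) * ws"
proof -
  have wpos: "ws > 0" using assms by linarith
  define rr where "rr = f / ws"
  have f: "f = rr * ws" using wpos rr_def by simp
  have rrA: "rr \<le> A" using pos_divide_le_eq[OF wpos] fA by (simp add: rr_def)
  have "(1 - \<alpha>) * f * q = rr * ((1 - \<alpha>) * q * ws)" by (simp add: f algebra_simps)
  also have "\<dots> = rr * (lam * (ws - \<alpha>))" by (simp add: hfix)
  finally have e1: "(1 - \<alpha>) * f * q / c = (ws - \<alpha>) * (rr * lam / c)" by (simp add: algebra_simps)
  have "(ws - \<alpha>) * (rr * lam / c) \<le> (ws - \<alpha>) * (A * lam / c)"
    using assms rrA by (intro mult_left_mono divide_right_mono mult_right_mono) auto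
  then have 1: "\<alpha> + (1 - \<alpha>) * f * q / c \<le> \<alpha> + (ws - \<alpha>) * (A * lam / c)" unfolding e1 by (rule add_left_mono)
  define a where "a = A * lam / c"
  have a1: "a \<ge> 1" using cA pos_le_divide_eq[OF assms(4)] by (simp add: a_def)
  have dw: "\<delta> * ws \<le> \<alpha>" using assms dw_lem by simp
  have "(a - 1) * (\<delta> * ws - \<alpha>) \<le> 0" using a1 dw by (simp add: mult_nonneg_nonpos)
  then have "\<alpha> + (ws - \<alpha>) * a \<le> (\<delta> + (1 - \<delta>) * a) * ws" by (simp add: algebra_simps)
  then show ?thesis using 1 a_def by simp
qed

lemma real_step_low:
  fixes \<alpha> lam c W ws f q K \<delta> :: real
  assumes "0 < \<alpha>" "\<alpha> < 1" "0 < lam" "0 < c" "\<alpha> \<le> ws" "ws \<le> W" "\<delta> = \<alpha> / W"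
    and hfix: "(1 - \<alpha>) * q * ws = lam * (ws - \<alpha>)"
    and fK: "ws \<le> K * f" and cK: "lam \<le> K * c" and K: "K > 0"
  shows "(\<delta> + (1 - \<delta>) * (lam / (K * c))) * ws \<le> \<alpha> + (1 - \<alpha>) * f * q / c"
proof -
  have wpos: "ws > 0" using assms by linarith
  define rr where "rr = f / ws"
  have f: "f = rr * ws" using wpos rr_def by simp
  have "1 \<le> K * rr" using pos_le_divide_eq[OF wpos] fK by (simp add: rr_def)
  then have rrA: "1 / K \<le> rr" using K by (simp add: pos_divide_le_eq mult.commute)
  have "(1 - \<alpha>) * f * q = rr * ((1 - \<alpha>) * q * ws)" by (simp add: f algebra_simps)
  also have "\<dots> = rr * (lam * (ws - \<alpha>))" by (simp add: hfix)
  finally have e1: "(1 - \<alpha>) * f * q / c = (ws - \<alpha>) * (rr * lam / c)" by (simp add: algebra_simps)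
  have "(ws - \<alpha>) * ((1 / K) * lam / c) \<le> (ws - \<alpha>) * (rr * lam / c)"
    using assms rrA by (intro mult_left_mono divide_right_mono mult_right_mono) auto
  moreover have "lam / (K * c) = (1 / K) * lam / c" by simp
  ultimately have "(ws - \<alpha>) * (lam / (K * c)) \<le> (ws - \<alpha>) * (rr * lam / c)" by (simp only:)
  then have 1: "\<alpha> + (ws - \<alpha>) * (lam / (K * c)) \<le> \<alpha> + (1 - \<alpha>) * f * q / c" unfolding e1 by (rule add_left_mono)
  define b where "b = lam / (K * c)"
  have Kc: "K * c > 0" using K assms by simp
  have b1: "b \<le> 1" using cK pos_divide_le_eq[OF Kc] by (simp add: b_def)
  have dw: "\<delta> * ws \<le> \<alpha>" using assms dw_lem by simp
  have "(1 - b) * (\<alpha> - \<delta> * ws) \<ge> 0" using b1 dw by simp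
  then have "\<alpha> + (ws - \<alpha>) * b \<ge> (\<delta> + (1 - \<delta>) * b) * ws" by (simp add: algebra_simps)
  then show ?thesis using 1 b_def by simp
qed

lemma real_prod:
  fixes \<delta> a b :: real
  assumes "0 < \<delta>" "\<delta> \<le> 1" "a \<ge> 1" "0 < b" "b \<le> 1"
  shows "(\<delta> + (1 - \<delta>) * a) / (\<delta> + (1 - \<delta>) * b) \<le> \<delta> + (1 - \<delta>) * (a / b)"
proof -
  have den: "\<delta> + (1 - \<delta>) * b > 0" using assms
    by (intro add_pos_nonneg mult_nonneg_nonneg) auto
  define x where "x = a / b"
  have ax: "a = x * b" using assms by (simp add: x_def)
  have x1: "x \<ge> 1" using assms unfolding x_def by (simp add: le_divide_eq)
  have id: "(\<delta> + (1 - \<delta>) * x) * (\<delta> + (1 - \<delta>) * b) - (\<delta> + (1 - \<delta>) * (x * b))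
      = \<delta> * (1 - \<delta>) * ((1 - b) * (x - 1))" by (simp add: algebra_simps)
  have "\<delta> * (1 - \<delta>) * ((1 - b) * (x - 1)) \<ge> 0" using assms x1 by (intro mult_nonneg_nonneg) auto
  then have "\<delta> + (1 - \<delta>) * a \<le> (\<delta> + (1 - \<delta>) * x) * (\<delta> + (1 - \<delta>) * b)"
    using id unfolding ax by linarith
  then show ?thesis unfolding pos_divide_le_eq[OF den] x_def .
qed



lemma esssup_real:
  fixes g :: "'a \<Rightarrow> real"
  assumes ps: "prob_space N" and gm: "g \<in> borel_measurable N"
    and pos: "AE x in N. 0 < g x" and bnd: "AE x in N. g x \<le> B"
  shows "\<exists>a. esssup N (\<lambda>x. ereal (g x)) = ereal a \<and> 0 < a \<and> a \<le> B \<and> (AE x in N. g x \<le> a)"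
proof -
  interpret prob_space N by fact
  define e where "e = esssup N (\<lambda>x. ereal (g x))"
  have em: "(\<lambda>x. ereal (g x)) \<in> borel_measurable N" using gm by measurable
  have eB: "e \<le> ereal B" unfolding e_def using bnd em by (intro esssup_I) auto
  have ae: "AE x in N. ereal (g x) \<le> e" unfolding e_def by (rule esssup_AE)
  have e0: "e > 0"
  proof (rule ccontr)
    assume "\<not> e > 0"
    then have "e \<le> 0" by simp
    have "AE x in N. False" using ae pos
    proof eventually_elim
      case (elim x)
      then have "ereal (g x) \<le> 0" using \<open>e \<le> 0\<close> by (metis order_trans)
      then show False using elim by simp
    qed
    then show False by simp
  qed
  obtain a where ea: "e = ereal a" using e0 eB by (cases e) auto
  have "AE x in N. g x \<le> a" using ae by eventually_elim (simp add: ea)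
  then show ?thesis using ea e0 eB by (auto simp: e_def)
qed


lemma ennreal_inv_ge:
  fixes I :: ennreal and a :: real
  assumes "I \<le> ennreal (1 / a)" "0 < a"
  shows "ennreal a \<le> inverse I"
proof (cases "I = 0")
  case True then show ?thesis by simp
next
  case False
  have "I < top" using assms(1) by (metis ennreal_less_top order_le_less_trans)
  then obtain i where i: "I = ennreal i" "0 \<le> i" by (cases I) auto
  have ipos: "0 < i" using False i by (auto simp: less_le)
  have "i \<le> 1 / a" using assms i by (simp add: ennreal_le_iff)
  then have "a \<le> inverse i" using ipos assms(2)
    by (simp add: le_divide_eq divide_le_eq field_simps)
  then show ?thesis using i ipos by (simp add: inverse_ennreal ennreal_leI)
qed



theorem theorem6:
  fixes M :: "'a measure" and P :: "'b measure"
    and r :: "'a \<Rightarrow> real" and eps :: "'a \<Rightarrow> 'b \<Rightarrow> real"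
    and \<alpha> :: real and p0 pref wstar :: "'a \<Rightarrow> real"
  assumes sf: "sigma_finite_measure M"
    and noise: "prob_space P"
    and r_meas: "r \<in> borel_measurable M"
    and eps_meas: "(\<lambda>(x, \<omega>). eps x \<omega>) \<in> borel_measurable (M \<Otimes>\<^sub>M P)"
    and alpha: "0 < \<alpha>" "\<alpha> < 1"
    \<comment> \<open>(a)\<close>
    and p0_dens: "prob_density M p0" and pref_dens: "prob_density M pref"
    and p0_ent: "(\<integral>\<^sup>+ x. ennreal (p0 x * \<bar>ln (p0 x)\<bar>) \<partial>M) < \<infinity>"
    and pref_ent: "(\<integral>\<^sup>+ x. ennreal (pref x * \<bar>ln (pref x)\<bar>) \<partial>M) < \<infinity>"
    \<comment> \<open>(b)\<close>
    and mgf: "\<And>p. prob_density M p \<Longrightarrow>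
        (\<integral>\<^sup>+ x. ennreal (p x) * (\<integral>\<^sup>+ \<omega>. ennreal (exp \<bar>r x + eps x \<omega>\<bar>) \<partial>P) \<partial>M) < \<infinity>"
    \<comment> \<open>(c)\<close>
    and Qstar_pos: "0 < Qstar M P r eps" and Qstar_fin: "Qstar M P r eps < \<infinity>"
    and Q_le: "\<And>x. x \<in> space M \<Longrightarrow> enn2ereal (Qext P r eps x) \<le> Qstar M P r eps"
    \<comment> \<open>(d): ess sup_pi p0/pref < infinity\<close>
    and d: "\<exists>C::real. AE x in M. p0 x \<le> C * pref x"
    \<comment> \<open>(e)\<close>
    and e: "inverse (\<integral>\<^sup>+ x. (if enn2ereal (Qext P r eps x) = Qstar M P r eps then \<infinity>
               else ennreal (real_of_ereal (Qstar M P r eps) /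
                 (real_of_ereal (Qstar M P r eps) - enn2real (Qext P r eps x)))) * ennreal (pref x) \<partial>M)
             < ennreal \<alpha>"
    \<comment> \<open>(f)\<close>
    and f: "essinf M (\<lambda>x. enn2ereal (Qext P r eps x)) > 0"
    \<comment> \<open>w_* : the fixed point of L_N in P_{P_ref}, lying in the cone K\<close>
    and wstar_dens: "prob_density (density M pref) wstar"
    and wstar_pos: "AE x in density M pref. wstar x > 0"
    and wstar_fix: "AE x in density M pref.
        LN (density M pref) (\<lambda>y. enn2real (Qext P r eps y)) \<alpha> wstar x = wstar x"
  shows "(\<forall>t\<ge>1.
      hilbert_metric (density M pref)
        (\<lambda>x. iterp M \<alpha> (\<lambda>y. enn2real (Qext P r eps y)) pref p0 t x / pref x) wstar < \<infinity>
    \<and> hilbert_metric (density M pref)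
        (\<lambda>x. iterp M \<alpha> (\<lambda>y. enn2real (Qext P r eps y)) pref p0 (Suc t) x / pref x) wstar
      \<le> hilbert_metric (density M pref)
        (\<lambda>x. iterp M \<alpha> (\<lambda>y. enn2real (Qext P r eps y)) pref p0 t x / pref x) wstar
    \<and> (hilbert_metric (density M pref)
        (\<lambda>x. iterp M \<alpha> (\<lambda>y. enn2real (Qext P r eps y)) pref p0 t x / pref x) wstar \<noteq> 0
       \<longrightarrow> hilbert_metric (density M pref)
        (\<lambda>x. iterp M \<alpha> (\<lambda>y. enn2real (Qext P r eps y)) pref p0 (Suc t) x / pref x) wstar
      < hilbert_metric (density M pref)
        (\<lambda>x. iterp M \<alpha> (\<lambda>y. enn2real (Qext P r eps y)) pref p0 t x / pref x) wstar))
    \<and> (\<lambda>t. hilbert_metric (density M pref)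
        (\<lambda>x. iterp M \<alpha> (\<lambda>y. enn2real (Qext P r eps y)) pref p0 t x / pref x) wstar)
         \<longlonglongrightarrow> 0"
proof -
  define Q where "Q = (\<lambda>y. enn2real (Qext P r eps y))"
  define N where "N = density M pref"
  define p where "p = iterp M \<alpha> Q pref p0"
  define w where "w = (\<lambda>t x. p t x / pref x)"
  define c where "c = (\<lambda>t. \<integral> y. p t y * Q y \<partial>M)"
  define H where "H = (\<lambda>t. hilbert_metric N (w t) wstar)"
  interpret P: prob_space P by fact
  obtain Qs where Qs: "Qstar M P r eps = ereal Qs" "0 < Qs"
    using Qstar_pos Qstar_fin by (cases "Qstar M P r eps") auto
  have Qext_meas: "Qext P r eps \<in> borel_measurable M"
  proof -
    have m: "(\<lambda>(x, y). ennreal (exp (eps x y))) \<in> borel_measurable (M \<Otimes>\<^sub>M P)"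
    proof -
      have "(\<lambda>(x, y). ennreal (exp (eps x y))) = (\<lambda>z. ennreal (exp ((\<lambda>(x, \<omega>). eps x \<omega>) z)))"
        by auto
      then show ?thesis using eps_meas by simp
    qed
    have "(\<lambda>x. \<integral>\<^sup>+ \<omega>. ennreal (exp (eps x \<omega>)) \<partial>P) \<in> borel_measurable M"
      using P.borel_measurable_nn_integral[OF m] .
    then show ?thesis unfolding Qext_def[abs_def] using r_meas by measurable
  qed
  have Qm: "Q \<in> borel_measurable M" unfolding Q_def using Qext_meas by measurable
  have Qext_eq: "Qext P r eps x = ennreal (Q x)" and Qb: "0 \<le> Q x" "Q x \<le> Qs"
    and Qeqs: "enn2ereal (Qext P r eps x) = Qstar M P r eps \<longleftrightarrow> Q x = Qs"
    if x: "x \<in> space M" for x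
  proof -
    have le: "enn2ereal (Qext P r eps x) \<le> ereal Qs" using Q_le[OF x] Qs by simp
    have "Qext P r eps x < top"
    proof (rule ccontr)
      assume "\<not> Qext P r eps x < top"
      then have "Qext P r eps x = top" using top.not_eq_extremum by blast
      then show False using le by simp
    qed
    then show e: "Qext P r eps x = ennreal (Q x)" unfolding Q_def by simp
    show "0 \<le> Q x" unfolding Q_def by simp
    show "Q x \<le> Qs" using le \<open>0 \<le> Q x\<close> unfolding e by simp
    show "enn2ereal (Qext P r eps x) = Qstar M P r eps \<longleftrightarrow> Q x = Qs"
      unfolding e Qs(1) using \<open>0 \<le> Q x\<close> by simp
  qed
  have prefm: "pref \<in> borel_measurable M" and pref0: "\<And>x. x \<in> space M \<Longrightarrow> 0 \<le> pref x"
    and pref1: "(\<integral>\<^sup>+ x. ennreal (pref x) \<partial>M) = 1"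
    using pref_dens unfolding prob_density_def by auto
  have spN: "space N = space M" and setsN: "sets N = sets M" unfolding N_def by auto
  have measN: "(borel_measurable N :: ('a \<Rightarrow> real) set) = borel_measurable M"
    using measurable_cong_sets[OF setsN refl, of borel] .
  have psN: "prob_space N"
  proof (rule prob_spaceI)
    have "emeasure N (space N) = (\<integral>\<^sup>+ x. ennreal (pref x) * indicator (space M) x \<partial>M)"
      unfolding N_def space_density by (rule emeasure_density) (use prefm in auto)
    also have "\<dots> = (\<integral>\<^sup>+ x. ennreal (pref x) \<partial>M)"
      by (rule nn_integral_cong) auto
    finally show "emeasure N (space N) = 1" using pref1 by simp
  qed
  interpret N: prob_space N by fact
  have AEN: "(AE x in N. R x) \<longleftrightarrow> (AE x in M. 0 < pref x \<longrightarrow> R x)" for R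
    unfolding N_def using AE_density[of "\<lambda>x. ennreal (pref x)" M R] prefm by simp
  have wsm: "wstar \<in> borel_measurable N" and ws0: "\<And>x. x \<in> space N \<Longrightarrow> 0 \<le> wstar x"
    and ws1: "(\<integral>\<^sup>+ x. ennreal (wstar x) \<partial>N) = 1"
    using wstar_dens unfolding prob_density_def N_def by auto
  have wsint: "integrable N wstar"
    using ws1 wsm ws0 by (intro integrableI_nonneg) (auto intro!: AE_I2)
  have wsI: "integral\<^sup>L N wstar = 1"
    using ws1 wsm ws0 by (subst (asm) nn_integral_eq_integral[OF wsint]) (auto intro!: AE_I2)
  define lam where "lam = (\<integral> y. wstar y * Q y \<partial>N)"
  have QmN: "Q \<in> borel_measurable N" using Qm measN by simp
  have wsQint: "integrable N (\<lambda>y. wstar y * Q y)"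
  proof (rule Bochner_Integration.integrable_bound[OF integrable_mult_right[OF wsint, of Qs]])
    show "(\<lambda>y. wstar y * Q y) \<in> borel_measurable N" using wsm QmN by measurable
    show "AE x in N. norm (wstar x * Q x) \<le> norm (Qs * wstar x)"
      using Qb ws0 spN Qs(2) by (intro AE_I2) (auto simp: abs_mult mult.commute[of "wstar _"] intro!: mult_right_mono)
  qed
  have lam0: "lam \<ge> 0" unfolding lam_def using Qb ws0 spN by (intro integral_nonneg_AE AE_I2) auto
  have fixAE: "AE x in N. wstar x = \<alpha> + (1 - \<alpha>) * wstar x * Q x / lam"
    using wstar_fix unfolding N_def[symmetric] LN_def Q_def[symmetric] lam_def by (auto elim!: eventually_mono)
  have lampos: "lam > 0"
  proof (rule ccontr)
    assume "\<not> lam > 0"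
    then have "lam = 0" using lam0 by simp
    then have "AE x in N. wstar x = \<alpha>" using fixAE by simp
    then have "integral\<^sup>L N wstar = integral\<^sup>L N (\<lambda>x. \<alpha>)" using wsm by (intro integral_cong_AE) auto
    then show False using wsI alpha N.prob_space by simp
  qed
  have wsal: "AE x in N. \<alpha> \<le> wstar x"
    using fixAE AE_space[of N]
  proof eventually_elim
    case (elim x)
    have "0 \<le> (1 - \<alpha>) * wstar x * Q x / lam" using alpha lampos ws0 Qb elim spN by simp
    then show ?case using elim by linarith
  qed
  have hfix: "AE x in N. (1 - \<alpha>) * Q x * wstar x = lam * (wstar x - \<alpha>)"
    using fixAE
  proof eventually_elim
    case (elim x)
    then have "wstar x * lam = \<alpha> * lam + (1 - \<alpha>) * wstar x * Q x"
      using lampos by (simp add: field_simps)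
    then show ?case by (simp add: algebra_simps)
  qed
  have wspos: "AE x in N. 0 < wstar x" using wsal by eventually_elim (use alpha in simp)
  have lambig: "lam > (1 - \<alpha>) * Qs"
  proof (rule ccontr)
    assume "\<not> lam > (1 - \<alpha>) * Qs"
    then have lamle: "lam \<le> (1 - \<alpha>) * Qs" by simp
    have ptw: "AE x in N. Q x < Qs \<and> \<alpha> * (Qs / (Qs - Q x)) \<le> wstar x"
      using hfix wsal AE_space[of N]
    proof eventually_elim
      case (elim x)
      then have x: "x \<in> space M" using spN by simp
      define D where "D = lam - (1 - \<alpha>) * Q x"
      have d: "wstar x * D = \<alpha> * lam" using elim(1) by (simp add: D_def algebra_simps)
      have wp: "wstar x > 0" using elim(2) alpha by simp
      have Dp: "D > 0"
      proof -
        have "wstar x * D > 0" using d alpha lampos by simp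
        then show ?thesis using wp by (simp add: zero_less_mult_iff)
      qed
      have "(1 - \<alpha>) * Q x < (1 - \<alpha>) * Qs" using Dp lamle by (simp add: D_def)
      then have QQ: "Q x < Qs" using alpha by simp
      have "\<alpha> * Qs * D \<le> \<alpha> * lam * (Qs - Q x)"
      proof -
        have "\<alpha> * lam * (Qs - Q x) - \<alpha> * Qs * D = \<alpha> * Q x * ((1 - \<alpha>) * Qs - lam)"
          by (simp add: D_def algebra_simps)
        also have "\<dots> \<ge> 0" using alpha Qb[OF x] lamle by simp
        finally show ?thesis by simp
      qed
      also have "\<dots> = (wstar x * D) * (Qs - Q x)" using d by simp
      also have "\<dots> = wstar x * (Qs - Q x) * D" by (simp add: algebra_simps)
      finally have "\<alpha> * Qs \<le> wstar x * (Qs - Q x)" using Dp by simp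
      then have "\<alpha> * Qs / (Qs - Q x) \<le> wstar x" using QQ by (simp add: pos_divide_le_eq)
      then show ?case using QQ by simp
    qed
    define G where "G = (\<lambda>x. (if enn2ereal (Qext P r eps x) = Qstar M P r eps then \<infinity>
               else ennreal (real_of_ereal (Qstar M P r eps) /
                 (real_of_ereal (Qstar M P r eps) - enn2real (Qext P r eps x)))) * ennreal (pref x))"
    have eG: "inverse (\<integral>\<^sup>+ x. G x \<partial>M) < ennreal \<alpha>" using e unfolding G_def .
    have "AE x in M. G x \<le> ennreal (wstar x / \<alpha>) * ennreal (pref x)"
      using ptw[unfolded AEN] AE_space[of M]
    proof eventually_elim
      case (elim x)
      show ?case
      proof (cases "pref x > 0")
        case True
        then have h: "Q x < Qs" "\<alpha> * (Qs / (Qs - Q x)) \<le> wstar x" using elim by auto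
        have ne: "\<not> (enn2ereal (Qext P r eps x) = Qstar M P r eps)" using Qeqs[OF elim(2)] h by simp
        have "Qs / (Qs - Q x) \<le> wstar x / \<alpha>" using h alpha by (simp add: le_divide_eq mult.commute)
        then have "ennreal (Qs / (Qs - Q x)) \<le> ennreal (wstar x / \<alpha>)" by (rule ennreal_leI)
        moreover have "enn2real (Qext P r eps x) = Q x" by (simp add: Q_def)
        ultimately show ?thesis unfolding G_def using ne Qs(1) by (simp add: mult_right_mono)
      next
        case False
        then have "pref x = 0" using pref0[OF elim(2)] by simp
        then show ?thesis unfolding G_def by simp
      qed
    qed
    then have "(\<integral>\<^sup>+ x. G x \<partial>M) \<le> (\<integral>\<^sup>+ x. ennreal (wstar x / \<alpha>) * ennreal (pref x) \<partial>M)"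
      by (rule nn_integral_mono_AE)
    also have "\<dots> = (\<integral>\<^sup>+ x. ennreal (pref x) * ennreal (wstar x / \<alpha>) \<partial>M)"
      by (simp add: mult.commute)
    also have "\<dots> = (\<integral>\<^sup>+ x. ennreal (wstar x / \<alpha>) \<partial>N)"
      unfolding N_def using wsm prefm measN by (subst nn_integral_density) (auto simp: N_def)
    also have "\<dots> = (\<integral>\<^sup>+ x. ennreal (1 / \<alpha>) * ennreal (wstar x) \<partial>N)"
      using ws0 alpha by (intro nn_integral_cong) (simp add: ennreal_mult[symmetric])
    also have "\<dots> = ennreal (1 / \<alpha>)"
      using ws1 wsm by (subst nn_integral_cmult) auto
    finally have "ennreal \<alpha> \<le> inverse (\<integral>\<^sup>+ x. G x \<partial>M)"
      using alpha by (intro ennreal_inv_ge) auto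
    then show False using eG by simp
  qed
  define W where "W = \<alpha> * lam / (lam - (1 - \<alpha>) * Qs)"
  have denW: "lam - (1 - \<alpha>) * Qs > 0" using lambig by simp
  have WQ: "W \<ge> \<alpha>"
  proof -
    have "lam - (1 - \<alpha>) * Qs \<le> lam" using alpha Qs by simp
    then have "\<alpha> * (lam - (1 - \<alpha>) * Qs) \<le> \<alpha> * lam" using alpha by simp
    then show ?thesis unfolding W_def using denW by (simp add: le_divide_eq)
  qed
  have wsW: "AE x in N. wstar x \<le> W"
    using hfix wsal AE_space[of N]
  proof eventually_elim
    case (elim x)
    then have x: "x \<in> space M" using spN by simp
    have d: "wstar x * (lam - (1 - \<alpha>) * Q x) = \<alpha> * lam" using elim(1) by (simp add: algebra_simps)
    have "lam - (1 - \<alpha>) * Qs \<le> lam - (1 - \<alpha>) * Q x" using Qb[OF x] alpha by simp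
    then have "wstar x * (lam - (1 - \<alpha>) * Qs) \<le> wstar x * (lam - (1 - \<alpha>) * Q x)"
      using elim(2) alpha by (intro mult_left_mono) auto
    then have "wstar x * (lam - (1 - \<alpha>) * Qs) \<le> \<alpha> * lam" using d by simp
    then show ?case unfolding W_def using denW by (simp add: le_divide_eq)
  qed
  define \<delta> where "\<delta> = \<alpha> / W"
  have \<delta>: "0 < \<delta>" "\<delta> \<le> 1" using WQ alpha by (auto simp: \<delta>_def divide_le_eq)
  have p0m: "p0 \<in> borel_measurable M" and p00: "\<And>x. x \<in> space M \<Longrightarrow> 0 \<le> p0 x"
    using p0_dens unfolding prob_density_def by auto
  have pSuc: "p (Suc t) = (\<lambda>x. \<alpha> * pref x + (1 - \<alpha>) * p t x * Q x / c t)" for t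
    by (simp add: p_def c_def)
  have pz0: "p 0 = p0" by (simp add: p_def)
  have pm: "p t \<in> borel_measurable M" for t
  proof (induction t)
    case 0 then show ?case using p0m pz0 by simp
  next
    case (Suc t) then show ?case unfolding pSuc using prefm Qm by measurable
  qed
  have pnn: "0 \<le> p t x" if "x \<in> space M" for t x
    using that
  proof (induction t arbitrary: x)
    case 0 then show ?case using p00 pz0 by simp
  next
    case (Suc t)
    have "c t \<ge> 0" unfolding c_def using Suc.IH Qb by (intro integral_nonneg_AE AE_I2) auto
    then show ?case unfolding pSuc using Suc alpha pref0 Qb by simp
  qed
  have cnn: "c t \<ge> 0" for t unfolding c_def using pnn Qb by (intro integral_nonneg_AE AE_I2) auto
  obtain C where C: "AE x in M. p0 x \<le> C * pref x" using d by blast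
  have pz: "AE x in M. pref x = 0 \<longrightarrow> p t x = 0" for t
  proof (induction t)
    case 0
    show ?case using C AE_space[of M]
      by eventually_elim (use p00 pz0 in \<open>force\<close>)
  next
    case (Suc t)
    then show ?case by eventually_elim (simp add: pSuc)
  qed
  have wmM: "w t \<in> borel_measurable M" for t unfolding w_def using pm prefm by measurable
  have wm: "w t \<in> borel_measurable N" for t using wmM measN by simp
  have wnn: "0 \<le> w t x" if "x \<in> space M" for t x unfolding w_def using pnn[OF that] pref0[OF that] by simp
  have cw: "c t = (\<integral> x. w t x * Q x \<partial>N)" for t
  proof -
    have "(\<integral> x. w t x * Q x \<partial>N) = (\<integral> x. pref x *\<^sub>R (w t x * Q x) \<partial>M)"
      unfolding N_def using wmM Qm prefm pref0 by (intro integral_density) auto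
    also have "\<dots> = (\<integral> x. p t x * Q x \<partial>M)"
      using pz[of t] wmM Qm prefm pm
      by (intro integral_cong_AE) (auto elim!: eventually_mono simp: w_def)
    finally show ?thesis by (simp add: c_def)
  qed
  have wrec: "AE x in N. w (Suc t) x = \<alpha> + (1 - \<alpha>) * w t x * Q x / c t" for t
    unfolding AEN by (intro AE_I2) (simp add: w_def pSuc add_divide_distrib)
  have wal: "AE x in N. \<alpha> \<le> w (Suc t) x" for t
    using wrec[of t] AE_space[of N]
  proof eventually_elim
    case (elim x)
    then have x: "x \<in> space M" using spN by simp
    have "0 \<le> (1 - \<alpha>) * w t x * Q x / c t" using alpha wnn[OF x] Qb[OF x] cnn[of t] by simp
    then show ?case using elim by linarith
  qed
  have base: "\<exists>A K. 0 < A \<and> 0 < K \<and> (AE x in N. w (Suc 0) x \<le> A * wstar x \<and> wstar x \<le> K * w (Suc 0) x)"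
  proof -
    define B1 where "B1 = \<alpha> + (1 - \<alpha>) * \<bar>C\<bar> * Qs / c 0"
    have w0C: "AE x in N. w 0 x \<le> \<bar>C\<bar>"
      unfolding AEN using C
    proof eventually_elim
      case (elim x)
      show ?case
      proof
        assume "0 < pref x"
        then have "p0 x / pref x \<le> C" using elim by (simp add: pos_divide_le_eq)
        then show "w 0 x \<le> \<bar>C\<bar>" by (simp add: w_def pz0)
      qed
    qed
    have B1: "AE x in N. w (Suc 0) x \<le> B1"
      using wrec[of 0] w0C AE_space[of N]
    proof eventually_elim
      case (elim x)
      then have x: "x \<in> space M" using spN by simp
      have "w 0 x * Q x \<le> \<bar>C\<bar> * Qs" using elim wnn[OF x] Qb[OF x] by (intro mult_mono) auto
      then have "(1 - \<alpha>) * (w 0 x * Q x) \<le> (1 - \<alpha>) * (\<bar>C\<bar> * Qs)" using alpha by (intro mult_left_mono) auto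
      then have "(1 - \<alpha>) * (w 0 x * Q x) / c 0 \<le> (1 - \<alpha>) * (\<bar>C\<bar> * Qs) / c 0"
        using cnn[of 0] by (rule divide_right_mono)
      then show ?case using elim(1) unfolding B1_def by (simp add: mult.assoc)
    qed
    have "AE x in N. w (Suc 0) x \<le> (B1 / \<alpha>) * wstar x \<and> wstar x \<le> (W / \<alpha>) * w (Suc 0) x"
      using B1 wal[of 0] wsal wsW
    proof eventually_elim
      case (elim x)
      have "B1 = (B1 / \<alpha>) * \<alpha>" using alpha by simp
      also have "\<dots> \<le> (B1 / \<alpha>) * wstar x"
        using elim alpha by (intro mult_left_mono) auto
      finally have 1: "w (Suc 0) x \<le> (B1 / \<alpha>) * wstar x" using elim by linarith
      have "(W / \<alpha>) * \<alpha> \<le> (W / \<alpha>) * w (Suc 0) x"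
        using elim alpha WQ by (intro mult_left_mono) auto
      then have 2: "wstar x \<le> (W / \<alpha>) * w (Suc 0) x" using elim alpha by simp
      show ?case using 1 2 by simp
    qed
    moreover have "0 < B1 / \<alpha>"
    proof -
      have "0 \<le> (1 - \<alpha>) * \<bar>C\<bar> * Qs / c 0" using alpha Qs cnn[of 0] by simp
      then show ?thesis using alpha by (simp add: B1_def)
    qed
    moreover have "0 < W / \<alpha>" using WQ alpha by simp
    ultimately show ?thesis by blast
  qed
  have step: "\<exists>A' K'. 0 < A' \<and> 0 < K' \<and> (AE x in N. w (Suc t) x \<le> A' * wstar x \<and> wstar x \<le> K' * w (Suc t) x)
                \<and> A' * K' \<le> \<delta> + (1 - \<delta>) * (A * K)"
    if AK: "0 < A" "0 < K" and bd: "AE x in N. w t x \<le> A * wstar x \<and> wstar x \<le> K * w t x" for t A K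
  proof -
    have int: "integrable N (\<lambda>x. w t x * Q x)"
    proof (rule Bochner_Integration.integrable_bound[OF integrable_mult_right[OF wsQint, of A]])
      show "(\<lambda>x. w t x * Q x) \<in> borel_measurable N" using wm QmN by measurable
      show "AE x in N. norm (w t x * Q x) \<le> norm (A * (wstar x * Q x))"
        using bd AE_space[of N]
      proof eventually_elim
        case (elim x)
        then have x: "x \<in> space M" using spN by simp
        have "w t x * Q x \<le> A * wstar x * Q x" using elim Qb[OF x] by (intro mult_right_mono) auto
        then show ?case using wnn[OF x] Qb[OF x] ws0 x spN AK by (simp add: abs_mult mult.assoc)
      qed
    qed
    have cle: "c t \<le> A * lam"
    proof -
      have "AE x in N. w t x * Q x \<le> A * (wstar x * Q x)" using bd AE_space[of N]
      proof eventually_elim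
        case (elim x)
        then have x: "x \<in> space M" using spN by simp
        have "w t x * Q x \<le> (A * wstar x) * Q x" using elim Qb[OF x] by (intro mult_right_mono) auto
        then show ?case by (simp add: mult.assoc)
      qed
      then have "c t \<le> (\<integral> x. A * (wstar x * Q x) \<partial>N)" unfolding cw
        using int integrable_mult_right[OF wsQint, of A] by (intro integral_mono_AE) auto
      then show ?thesis by (simp add: lam_def)
    qed
    have cge: "lam \<le> K * c t"
    proof -
      have "AE x in N. wstar x * Q x \<le> K * (w t x * Q x)" using bd AE_space[of N]
      proof eventually_elim
        case (elim x)
        then have x: "x \<in> space M" using spN by simp
        have "wstar x * Q x \<le> (K * w t x) * Q x" using elim Qb[OF x] by (intro mult_right_mono) auto
        then show ?case by (simp add: mult.assoc)
      qed
      then have "lam \<le> (\<integral> x. K * (w t x * Q x) \<partial>N)" unfolding lam_def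
        using int integrable_mult_right[OF int, of K] wsQint by (intro integral_mono_AE) auto
      then show ?thesis by (simp add: cw)
    qed
    have cpos: "c t > 0"
    proof -
      have "K * c t > 0" using cge lampos by linarith
      then show ?thesis using AK by (simp add: zero_less_mult_iff)
    qed
    define A' where "A' = \<delta> + (1 - \<delta>) * (A * lam / c t)"
    define K' where "K' = 1 / (\<delta> + (1 - \<delta>) * (lam / (K * c t)))"
    have den: "\<delta> + (1 - \<delta>) * (lam / (K * c t)) > 0"
      using \<delta> lampos AK cpos by (intro add_pos_nonneg mult_nonneg_nonneg) auto
    have A'pos: "A' > 0" unfolding A'_def
      using \<delta> lampos AK cpos by (intro add_pos_nonneg mult_nonneg_nonneg) auto
    have K'pos: "K' > 0" unfolding K'_def using den by simp
    have "AE x in N. w (Suc t) x \<le> A' * wstar x \<and> wstar x \<le> K' * w (Suc t) x"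
      using wrec[of t] hfix wsal wsW bd
    proof eventually_elim
      case (elim x)
      have 1: "w (Suc t) x \<le> A' * wstar x"
        unfolding elim(1) A'_def
        by (rule real_step_up[where W=W]) (use alpha lampos cpos elim cle \<delta>_def in auto)
      have 2: "(\<delta> + (1 - \<delta>) * (lam / (K * c t))) * wstar x \<le> w (Suc t) x"
        unfolding elim(1)
        by (rule real_step_low[where W=W]) (use alpha lampos cpos elim cge \<delta>_def AK in auto)
      have "wstar x \<le> K' * w (Suc t) x"
        unfolding K'_def using 2 den by (simp add: divide_simps mult.commute)
      then show ?case using 1 by simp
    qed
    moreover have "A' * K' \<le> \<delta> + (1 - \<delta>) * (A * K)"
    proof -
      have a1: "A * lam / c t \<ge> 1" using cle cpos by (simp add: le_divide_eq)
      have b1: "lam / (K * c t) \<le> 1" "0 < lam / (K * c t)" using cge cpos AK lampos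
        by (auto simp: divide_le_eq)
      have "A' * K' \<le> \<delta> + (1 - \<delta>) * ((A * lam / c t) / (lam / (K * c t)))"
        unfolding A'_def K'_def using real_prod[OF \<delta> a1 b1(2) b1(1)] by simp
      also have "(A * lam / c t) / (lam / (K * c t)) = A * K"
        using cpos lampos AK by (simp add: field_simps)
      finally show ?thesis .
    qed
    ultimately show ?thesis using A'pos K'pos by blast
  qed
  have bnd: "\<exists>A K. 0 < A \<and> 0 < K \<and> (AE x in N. w (Suc n) x \<le> A * wstar x \<and> wstar x \<le> K * w (Suc n) x)" for n
  proof (induction n)
    case 0 then show ?case using base by simp
  next
    case (Suc n)
    then obtain A K where "0 < A" "0 < K" "AE x in N. w (Suc n) x \<le> A * wstar x \<and> wstar x \<le> K * w (Suc n) x"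
      by blast
    from step[OF this] show ?case by blast
  qed
  define ea where "ea = (\<lambda>t. esssup N (\<lambda>x. ereal (w t x / wstar x)))"
  define ek where "ek = (\<lambda>t. esssup N (\<lambda>x. ereal (wstar x / w t x)))"
  have fin: "\<exists>a k. ea (Suc n) = ereal a \<and> ek (Suc n) = ereal k \<and> 0 < a \<and> 0 < k
       \<and> (AE x in N. w (Suc n) x \<le> a * wstar x \<and> wstar x \<le> k * w (Suc n) x)" for n
  proof -
    obtain A K where AK: "0 < A" "0 < K" and bd: "AE x in N. w (Suc n) x \<le> A * wstar x \<and> wstar x \<le> K * w (Suc n) x"
      using bnd by blast
    have wp: "AE x in N. 0 < w (Suc n) x" using wal[of n] by eventually_elim (use alpha in simp)
    obtain a where a: "ea (Suc n) = ereal a" "0 < a" "AE x in N. w (Suc n) x / wstar x \<le> a"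
    proof -
      have "\<exists>a. esssup N (\<lambda>x. ereal (w (Suc n) x / wstar x)) = ereal a \<and> 0 < a \<and> a \<le> A
              \<and> (AE x in N. w (Suc n) x / wstar x \<le> a)"
      proof (rule esssup_real[OF psN])
        show "(\<lambda>x. w (Suc n) x / wstar x) \<in> borel_measurable N" using wm wsm by measurable
        show "AE x in N. 0 < w (Suc n) x / wstar x" using wp wspos by eventually_elim simp
        show "AE x in N. w (Suc n) x / wstar x \<le> A" using bd wspos
          by eventually_elim (simp add: pos_divide_le_eq)
      qed
      then show ?thesis using that unfolding ea_def by blast
    qed
    obtain k where k: "ek (Suc n) = ereal k" "0 < k" "AE x in N. wstar x / w (Suc n) x \<le> k"
    proof -
      have "\<exists>k. esssup N (\<lambda>x. ereal (wstar x / w (Suc n) x)) = ereal k \<and> 0 < k \<and> k \<le> K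
              \<and> (AE x in N. wstar x / w (Suc n) x \<le> k)"
      proof (rule esssup_real[OF psN])
        show "(\<lambda>x. wstar x / w (Suc n) x) \<in> borel_measurable N" using wm wsm by measurable
        show "AE x in N. 0 < wstar x / w (Suc n) x" using wp wspos by eventually_elim simp
        show "AE x in N. wstar x / w (Suc n) x \<le> K" using bd wp
          by eventually_elim (simp add: pos_divide_le_eq)
      qed
      then show ?thesis using that unfolding ek_def by blast
    qed
    have "AE x in N. w (Suc n) x \<le> a * wstar x \<and> wstar x \<le> k * w (Suc n) x"
      using a(3) k(3) wp wspos by eventually_elim (simp add: pos_divide_le_eq)
    then show ?thesis using a k by blast
  qed
  define \<rho> where "\<rho> = (\<lambda>n. real_of_ereal (ea (Suc n)) * real_of_ereal (ek (Suc n)))"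
  have Heq: "H (Suc n) = ereal (ln (\<rho> n))" for n
  proof -
    obtain a k where "ea (Suc n) = ereal a" "ek (Suc n) = ereal k"
      using fin[of n] by blast
    then show ?thesis unfolding H_def hilbert_metric_def \<rho>_def ea_def ek_def Let_def by simp
  qed
  have \<rho>1: "\<rho> n \<ge> 1" for n
  proof -
    obtain a k where ak: "ea (Suc n) = ereal a" "ek (Suc n) = ereal k" "0 < a" "0 < k"
      and bd: "AE x in N. w (Suc n) x \<le> a * wstar x \<and> wstar x \<le> k * w (Suc n) x"
      using fin[of n] by blast
    have "AE x in N. 1 \<le> k * a" using bd wspos
    proof eventually_elim
      case (elim x)
      have "wstar x \<le> k * (a * wstar x)" using elim ak by (meson mult_left_mono order.trans less_imp_le)
      then have "1 * wstar x \<le> (k * a) * wstar x" by (simp add: mult.assoc)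
      then show ?case using elim by (meson mult_le_cancel_right_pos)
    qed
    then have "1 \<le> k * a" by simp
    then show ?thesis unfolding \<rho>_def using ak by (simp add: mult.commute)
  qed
  have \<rho>rec: "\<rho> (Suc n) \<le> \<delta> + (1 - \<delta>) * \<rho> n" for n
  proof -
    obtain a k where ak: "ea (Suc n) = ereal a" "ek (Suc n) = ereal k" "0 < a" "0 < k"
      and bd: "AE x in N. w (Suc n) x \<le> a * wstar x \<and> wstar x \<le> k * w (Suc n) x"
      using fin[of n] by blast
    obtain A' K' where AK': "0 < A'" "0 < K'"
      and bd': "AE x in N. w (Suc (Suc n)) x \<le> A' * wstar x \<and> wstar x \<le> K' * w (Suc (Suc n)) x"
      and pr: "A' * K' \<le> \<delta> + (1 - \<delta>) * (a * k)"
      using step[OF ak(3,4) bd] by blast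
    obtain a' k' where ak': "ea (Suc (Suc n)) = ereal a'" "ek (Suc (Suc n)) = ereal k'" "0 < a'" "0 < k'"
      using fin[of "Suc n"] by blast
    have wp: "AE x in N. 0 < w (Suc (Suc n)) x" using wal[of "Suc n"] by eventually_elim (use alpha in simp)
    have "ereal a' \<le> ereal A'" unfolding ak'(1)[symmetric] ea_def
    proof (rule esssup_I)
      show "(\<lambda>x. ereal (w (Suc (Suc n)) x / wstar x)) \<in> borel_measurable N" using wm wsm by measurable
      show "AE x in N. ereal (w (Suc (Suc n)) x / wstar x) \<le> ereal A'" using bd' wspos
        by eventually_elim (simp add: pos_divide_le_eq)
    qed
    moreover have "ereal k' \<le> ereal K'" unfolding ak'(2)[symmetric] ek_def
    proof (rule esssup_I)
      show "(\<lambda>x. ereal (wstar x / w (Suc (Suc n)) x)) \<in> borel_measurable N" using wm wsm by measurable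
      show "AE x in N. ereal (wstar x / w (Suc (Suc n)) x) \<le> ereal K'" using bd' wp
        by eventually_elim (simp add: pos_divide_le_eq)
    qed
    ultimately have "a' * k' \<le> A' * K'" using ak' by (intro mult_mono) auto
    then show ?thesis unfolding \<rho>_def using ak ak' pr by simp
  qed
  have \<rho>geo: "\<rho> n - 1 \<le> (1 - \<delta>) ^ n * (\<rho> 0 - 1)" for n
  proof (induction n)
    case 0 then show ?case by simp
  next
    case (Suc n)
    have "\<rho> (Suc n) - 1 \<le> (1 - \<delta>) * (\<rho> n - 1)" using \<rho>rec[of n] by (simp add: algebra_simps)
    also have "\<dots> \<le> (1 - \<delta>) * ((1 - \<delta>) ^ n * (\<rho> 0 - 1))"
      using Suc \<delta> by (intro mult_left_mono) auto
    finally show ?case by (simp add: mult.assoc)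
  qed
  have lim0: "(\<lambda>n. ln (\<rho> n)) \<longlonglongrightarrow> 0"
  proof (rule real_tendsto_sandwich[where f="\<lambda>_. 0" and h="\<lambda>n. (1 - \<delta>) ^ n * (\<rho> 0 - 1)"])
    show "\<forall>\<^sub>F n in sequentially. 0 \<le> ln (\<rho> n)" using \<rho>1 by simp
    show "\<forall>\<^sub>F n in sequentially. ln (\<rho> n) \<le> (1 - \<delta>) ^ n * (\<rho> 0 - 1)"
    proof (intro always_eventually allI)
      fix n
      have "ln (\<rho> n) \<le> \<rho> n - 1" using \<rho>1[of n] by (intro ln_le_minus_one) simp
      then show "ln (\<rho> n) \<le> (1 - \<delta>) ^ n * (\<rho> 0 - 1)" using \<rho>geo[of n] by linarith
    qed
    show "(\<lambda>_. 0) \<longlonglongrightarrow> (0::real)" by simp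
    have "norm (1 - \<delta>) < 1" using \<delta> by (simp add: abs_if)
    then have "(\<lambda>n. (1 - \<delta>) ^ n) \<longlonglongrightarrow> 0" by (rule LIMSEQ_power_zero)
    then show "(\<lambda>n. (1 - \<delta>) ^ n * (\<rho> 0 - 1)) \<longlonglongrightarrow> 0"
      by (rule tendsto_mult_left_zero)
  qed
  have main1: "\<forall>t\<ge>1. H t < \<infinity> \<and> H (Suc t) \<le> H t \<and> (H t \<noteq> 0 \<longrightarrow> H (Suc t) < H t)"
  proof (intro allI impI)
    fix t :: nat assume "1 \<le> t"
    then obtain n where t: "t = Suc n" by (cases t) auto
    have r1: "\<rho> n \<ge> 1" "\<rho> (Suc n) \<ge> 1" using \<rho>1 by auto
    have le: "\<rho> (Suc n) \<le> \<rho> n"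
    proof -
      have "\<delta> + (1 - \<delta>) * \<rho> n \<le> \<rho> n" using \<delta> r1 by (simp add: algebra_simps mult_left_le_one_le)
      then show ?thesis using \<rho>rec[of n] by linarith
    qed
    have lt: "\<rho> (Suc n) < \<rho> n" if "\<rho> n \<noteq> 1"
    proof -
      have "\<rho> n > 1" using r1 that by simp
      then have "\<delta> * 1 < \<delta> * \<rho> n" using \<delta> by (intro mult_strict_left_mono) auto
      then have "\<delta> + (1 - \<delta>) * \<rho> n < \<rho> n" by (simp add: algebra_simps)
      then show ?thesis using \<rho>rec[of n] by linarith
    qed
    show "H t < \<infinity> \<and> H (Suc t) \<le> H t \<and> (H t \<noteq> 0 \<longrightarrow> H (Suc t) < H t)"
      unfolding t Heq using le lt r1 by (auto simp: zero_ereal_def)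
  qed
  have main2: "H \<longlonglongrightarrow> 0"
  proof -
    have "(\<lambda>n. ereal (ln (\<rho> n))) \<longlonglongrightarrow> ereal 0" using lim0 by simp
    then have "(\<lambda>n. H (Suc n)) \<longlonglongrightarrow> 0" unfolding Heq zero_ereal_def .
    then show ?thesis by (rule LIMSEQ_imp_Suc)
  qed
  have Hdef: "H = (\<lambda>t. hilbert_metric (density M pref)
        (\<lambda>x. iterp M \<alpha> (\<lambda>y. enn2real (Qext P r eps y)) pref p0 t x / pref x) wstar)"
    by (simp add: H_def w_def p_def Q_def N_def)
  show ?thesis using main1 main2 unfolding Hdef by simp
qed


end
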